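(* Let $p>3$ be a prime and $k\ge1$. Then there exists an automorphism $\phi$ of the restricted wreath product $\mathbb{Z}_p\,\mathrm{wr}\,\mathbb{Z}^k$ with finite Reidemeister number $R(\phi)$. In particular, $\mathbb{Z}_p\,\mathrm{wr}\,\mathbb{Z}^k$ does not have the property $R_\infty$.
   Context: For an automorphism $\phi$ of a group $G$, $R(\phi)$ is the number of classes of the relation $g\sim hg\phi(h^{-1})$, $h,g\in G$. A group has property $R_\infty$ if $R(\phi)=\infty$ for every automorphism. $\mathbb{Z}_p\,\mathrm{wr}\,\mathbb{Z}^k=\left(\bigoplus_{x\in\mathbb{Z}^k}A_x\right)\rtimes_\alpha\mathbb{Z}^k$, with $A_x\cong\mathbb{Z}_p$ generated by $\delta_x$, finitely supported direct sum, and $\alpha(y)(\delta_x)=\delta_{y+x}$. *)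

theory Defs
  imports "HOL-Computational_Algebra.Primes" "HOL-Algebra.Group"
begin

text \<open>Z^k is represented as integer vectors \<open>nat \<Rightarrow> int\<close> vanishing outside the
  indices 0..k-1.\<close>
definition Zk :: "nat \<Rightarrow> (nat \<Rightarrow> int) set" where
  "Zk k = {y. \<forall>i\<ge>k. y i = 0}"

text \<open>Restricted wreath product Z_p wr Z^k = (finitely supported
  maps Z^k \<rightarrow> Z_p) \<rtimes> Z^k, where Z^k acts by translation:
  alpha(y)(delta_x) = delta_(y+x), i.e. (alpha(y) g)(x) = g(x - y).\<close>
definition wreath :: "nat \<Rightarrow> nat \<Rightarrow> (((nat \<Rightarrow> int) \<Rightarrow> int) \<times> (nat \<Rightarrow> int)) monoid" where
  "wreath p k = \<lparr>
     carrier = {(f, y). finite {x. f x \<noteq> 0} \<and> (\<forall>x. f x \<in> {0..<int p})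
                        \<and> (\<forall>x. f x \<noteq> 0 \<longrightarrow> x \<in> Zk k) \<and> y \<in> Zk k},
     mult = (\<lambda>(f, y) (g, z). ((\<lambda>x. (f x + g (\<lambda>i. x i - y i)) mod int p),
                             (\<lambda>i. y i + z i))),
     one = ((\<lambda>x. 0), (\<lambda>i. 0)) \<rparr>"

definition reidemeister_classes :: "('a, 'b) monoid_scheme \<Rightarrow> ('a \<Rightarrow> 'a) \<Rightarrow> 'a set set" where
  "reidemeister_classes G \<phi> =
     (\<lambda>g. {h \<otimes>\<^bsub>G\<^esub> g \<otimes>\<^bsub>G\<^esub> \<phi> (inv\<^bsub>G\<^esub> h) | h. h \<in> carrier G}) ` carrier G"

definition has_R_infty :: "('a, 'b) monoid_scheme \<Rightarrow> bool" where
  "has_R_infty G = (\<forall>\<phi>\<in>iso G G. infinite (reidemeister_classes G \<phi>))"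

end

theory Submission
  imports Defs
begin

lemma wr_carrier:
  "(f, y) \<in> carrier (wreath p k) \<longleftrightarrow>
     finite {x. f x \<noteq> 0} \<and> (\<forall>x. f x \<in> {0..<int p}) \<and> (\<forall>x. f x \<noteq> 0 \<longrightarrow> x \<in> Zk k) \<and> y \<in> Zk k"
  by (simp add: wreath_def)

lemma wr_mult:
  "(f, y) \<otimes>\<^bsub>wreath p k\<^esub> (g, z) = ((\<lambda>x. (f x + g (\<lambda>i. x i - y i)) mod int p), (\<lambda>i. y i + z i))"
  by (simp add: wreath_def)

lemma wr_one: "\<one>\<^bsub>wreath p k\<^esub> = ((\<lambda>x. 0), (\<lambda>i. 0))"
  by (simp add: wreath_def)

lemma Zk_add: "y \<in> Zk k \<Longrightarrow> z \<in> Zk k \<Longrightarrow> (\<lambda>i. y i + z i) \<in> Zk k"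
  by (simp add: Zk_def)
lemma Zk_diff: "y \<in> Zk k \<Longrightarrow> z \<in> Zk k \<Longrightarrow> (\<lambda>i. y i - z i) \<in> Zk k"
  by (simp add: Zk_def)
lemma Zk_uminus: "y \<in> Zk k \<Longrightarrow> (\<lambda>i. - y i) \<in> Zk k"
  by (simp add: Zk_def)
lemma Zk_diff_rev: "y \<in> Zk k \<Longrightarrow> (\<lambda>i. x i - y i) \<in> Zk k \<Longrightarrow> x \<in> Zk k"
  by (simp add: Zk_def)

lemma wr_closed:
  assumes p: "p > 0" and a: "(f, y) \<in> carrier (wreath p k)" and b: "(g, z) \<in> carrier (wreath p k)"
  shows "(f, y) \<otimes>\<^bsub>wreath p k\<^esub> (g, z) \<in> carrier (wreath p k)"
proof -
  have S: "{x. (f x + g (\<lambda>i. x i - y i)) mod int p \<noteq> 0} \<subseteq>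
     {x. f x \<noteq> 0} \<union> (\<lambda>x. \<lambda>i. x i + y i) ` {x. g x \<noteq> 0}"
  proof
    fix x assume "x \<in> {x. (f x + g (\<lambda>i. x i - y i)) mod int p \<noteq> 0}"
    hence "f x \<noteq> 0 \<or> g (\<lambda>i. x i - y i) \<noteq> 0" by auto
    then show "x \<in> {x. f x \<noteq> 0} \<union> (\<lambda>x. \<lambda>i. x i + y i) ` {x. g x \<noteq> 0}"
    proof
      assume "g (\<lambda>i. x i - y i) \<noteq> 0"
      then show ?thesis by (intro UnI2 rev_image_eqI[of "\<lambda>i. x i - y i"]) auto
    qed auto
  qed
  have F: "finite {x. (f x + g (\<lambda>i. x i - y i)) mod int p \<noteq> 0}"
    using a b by (intro finite_subset[OF S]) (auto simp: wr_carrier)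
  have aZ: "y \<in> Zk k" "\<forall>x. f x \<noteq> 0 \<longrightarrow> x \<in> Zk k" "\<forall>x. f x \<in> {0..<int p}"
    using a by (simp_all add: wr_carrier)
  have bZ: "z \<in> Zk k" "\<forall>x. g x \<noteq> 0 \<longrightarrow> x \<in> Zk k"
    using b by (simp_all add: wr_carrier)
  have Z: "x \<in> Zk k" if "(f x + g (\<lambda>i. x i - y i)) mod int p \<noteq> 0" for x
  proof -
    from that have "f x \<noteq> 0 \<or> g (\<lambda>i. x i - y i) \<noteq> 0" by auto
    then show ?thesis
    proof
      assume "g (\<lambda>i. x i - y i) \<noteq> 0"
      then have "(\<lambda>i. x i - y i) \<in> Zk k" using bZ by blast
      then show ?thesis using Zk_diff_rev[OF aZ(1)] by blast
    next
      assume "f x \<noteq> 0" then show ?thesis using aZ by blast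
    qed
  qed
  have V: "\<forall>x. (f x + g (\<lambda>i. x i - y i)) mod int p \<in> {0..<int p}" using p by simp
  show ?thesis unfolding wr_mult wr_carrier
    using F Z V Zk_add[OF aZ(1) bZ(1)] by blast
qed

lemma finite_supp_comp:
  assumes "\<And>x. S (T x) = x" and "finite {x. f x \<noteq> 0}"
  shows "finite {x. (f (T x) :: int) \<noteq> 0}"
proof -
  have "{x. f (T x) \<noteq> 0} \<subseteq> S ` {x. f x \<noteq> 0}"
  proof
    fix x assume "x \<in> {x. f (T x) \<noteq> 0}"
    then show "x \<in> S ` {x. f x \<noteq> 0}" using assms(1) by (intro rev_image_eqI[of "T x"]) auto
  qed
  then show ?thesis using assms(2) finite_surj by blast
qed

lemma inv_carrier:
  assumes "(f, a) \<in> carrier (wreath p k)" "p > 0"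
  shows "((\<lambda>x. (- f (\<lambda>i. x i + a i)) mod int p), (\<lambda>i. - a i)) \<in> carrier (wreath p k)"
proof -
  have F: "finite {x. f (\<lambda>i. x i + a i) \<noteq> 0}"
    by (rule finite_supp_comp[where S="\<lambda>x i. x i - a i"]) (use assms in \<open>auto simp: wr_carrier\<close>)
  have "{x. (- f (\<lambda>i. x i + a i)) mod int p \<noteq> 0} \<subseteq> {x. f (\<lambda>i. x i + a i) \<noteq> 0}" by auto
  then have F2: "finite {x. (- f (\<lambda>i. x i + a i)) mod int p \<noteq> 0}" using F finite_subset by blast
  have Z: "x \<in> Zk k" if "(- f (\<lambda>i. x i + a i)) mod int p \<noteq> 0" for x
  proof -
    have "f (\<lambda>i. x i + a i) \<noteq> 0" using that by auto
    then have "(\<lambda>i. x i + a i) \<in> Zk k" using assms by (auto simp: wr_carrier)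
    then show ?thesis using assms by (auto simp: wr_carrier Zk_def)
  qed
  show ?thesis using F2 Z assms by (auto simp: wr_carrier Zk_def)
qed

lemma wr_group:
  assumes p: "p > 0"
  shows "group (wreath p k)"
proof (rule groupI)
  fix x y assume "x \<in> carrier (wreath p k)" "y \<in> carrier (wreath p k)"
  then show "x \<otimes>\<^bsub>wreath p k\<^esub> y \<in> carrier (wreath p k)"
    using wr_closed[OF p] by (cases x, cases y) auto
next
  show "\<one>\<^bsub>wreath p k\<^esub> \<in> carrier (wreath p k)"
    using p by (simp add: wr_one wr_carrier Zk_def)
next
  fix x y z assume "x \<in> carrier (wreath p k)" "y \<in> carrier (wreath p k)" "z \<in> carrier (wreath p k)"
  obtain f a g b h c where [simp]: "x = (f, a)" "y = (g, b)" "z = (h, c)"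
    by (cases x, cases y, cases z) auto
  show "x \<otimes>\<^bsub>wreath p k\<^esub> y \<otimes>\<^bsub>wreath p k\<^esub> z = x \<otimes>\<^bsub>wreath p k\<^esub> (y \<otimes>\<^bsub>wreath p k\<^esub> z)"
    by (simp add: wr_mult fun_eq_iff mod_add_left_eq mod_add_right_eq add.assoc diff_diff_eq)
next
  fix x assume x: "x \<in> carrier (wreath p k)"
  obtain f a where [simp]: "x = (f, a)" by (cases x) auto
  show "\<one>\<^bsub>wreath p k\<^esub> \<otimes>\<^bsub>wreath p k\<^esub> x = x"
    using x by (auto simp: wr_one wr_mult wr_carrier fun_eq_iff)
next
  fix x assume x: "x \<in> carrier (wreath p k)"
  obtain f a where [simp]: "x = (f, a)" by (cases x) auto
  have "((\<lambda>x. (- f (\<lambda>i. x i + a i)) mod int p), (\<lambda>i. - a i)) \<in> carrier (wreath p k)"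
    using x p inv_carrier by simp
  moreover have "((\<lambda>x. (- f (\<lambda>i. x i + a i)) mod int p), (\<lambda>i. - a i)) \<otimes>\<^bsub>wreath p k\<^esub> x = \<one>\<^bsub>wreath p k\<^esub>"
    by (simp add: wr_mult wr_one fun_eq_iff mod_add_left_eq)
  ultimately show "\<exists>y\<in>carrier (wreath p k). y \<otimes>\<^bsub>wreath p k\<^esub> x = \<one>\<^bsub>wreath p k\<^esub>" by blast
qed

lemma wr_inv:
  assumes "(f, a) \<in> carrier (wreath p k)" "p > 0"
  shows "inv\<^bsub>wreath p k\<^esub> (f, a) = ((\<lambda>x. (- f (\<lambda>i. x i + a i)) mod int p), (\<lambda>i. - a i))"
proof -
  interpret group "wreath p k" using wr_group[OF assms(2)] .
  show ?thesis
    by (rule inv_equality) (use assms inv_carrier in \<open>auto simp: wr_mult wr_one fun_eq_iff mod_add_left_eq\<close>)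
qed

definition phi :: "nat \<Rightarrow> ((nat \<Rightarrow> int) \<Rightarrow> int) \<times> (nat \<Rightarrow> int) \<Rightarrow> ((nat \<Rightarrow> int) \<Rightarrow> int) \<times> (nat \<Rightarrow> int)" where
  "phi p = (\<lambda>(f, y). ((\<lambda>x. (2 * f (\<lambda>i. - x i)) mod int p), (\<lambda>i. - y i)))"

definition psi :: "nat \<Rightarrow> ((nat \<Rightarrow> int) \<Rightarrow> int) \<times> (nat \<Rightarrow> int) \<Rightarrow> ((nat \<Rightarrow> int) \<Rightarrow> int) \<times> (nat \<Rightarrow> int)" where
  "psi p = (\<lambda>(f, y). ((\<lambda>x. ((int p + 1) div 2 * f (\<lambda>i. - x i)) mod int p), (\<lambda>i. - y i)))"

lemma scal_carrier:
  assumes "(f, a) \<in> carrier (wreath p k)" "p > 0"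
  shows "((\<lambda>x. (c * f (\<lambda>i. - x i)) mod int p), (\<lambda>i. - a i)) \<in> carrier (wreath p k)"
proof -
  have F: "finite {x. f (\<lambda>i. - x i) \<noteq> 0}"
    by (rule finite_supp_comp[where S="\<lambda>x i. - x i"]) (use assms in \<open>auto simp: wr_carrier\<close>)
  have "{x. (c * f (\<lambda>i. - x i)) mod int p \<noteq> 0} \<subseteq> {x. f (\<lambda>i. - x i) \<noteq> 0}" by auto
  then have F2: "finite {x. (c * f (\<lambda>i. - x i)) mod int p \<noteq> 0}" using F finite_subset by blast
  have Z: "x \<in> Zk k" if "(c * f (\<lambda>i. - x i)) mod int p \<noteq> 0" for x
  proof -
    have "f (\<lambda>i. - x i) \<noteq> 0" using that by auto
    then have "(\<lambda>i. - x i) \<in> Zk k" using assms by (auto simp: wr_carrier)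
    then show ?thesis using assms by (auto simp: wr_carrier Zk_def)
  qed
  show ?thesis using F2 Z assms by (auto simp: wr_carrier Zk_def)
qed

lemma phi_hom:
  assumes "p > 0"
  shows "phi p \<in> hom (wreath p k) (wreath p k)"
proof (rule homI)
  fix x assume "x \<in> carrier (wreath p k)"
  then show "phi p x \<in> carrier (wreath p k)"
    using scal_carrier[OF _ assms] by (cases x) (auto simp: phi_def)
next
  fix x y assume "x \<in> carrier (wreath p k)" "y \<in> carrier (wreath p k)"
  obtain f a g b where [simp]: "x = (f, a)" "y = (g, b)" by (cases x, cases y) auto
  show "phi p (x \<otimes>\<^bsub>wreath p k\<^esub> y) = phi p x \<otimes>\<^bsub>wreath p k\<^esub> phi p y"
    by (simp add: phi_def wr_mult fun_eq_iff mod_add_left_eq mod_add_right_eq mod_mult_right_eq distrib_left)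
qed

lemma two_half: "odd p \<Longrightarrow> (int p + 1) div 2 * 2 = int p + 1"
  by (metis dvd_div_mult_self even_add even_of_nat odd_one)

lemma phi_psi:
  assumes "(f, a) \<in> carrier (wreath p k)" "p > 0" "odd p"
  shows "psi p (phi p (f, a)) = (f, a)" "phi p (psi p (f, a)) = (f, a)"
proof -
  have r: "f x mod int p = f x" for x using assms by (auto simp: wr_carrier)
  have e: "((int p + 1) div 2 * (2 * z mod int p)) mod int p = z mod int p"
     "(2 * ((int p + 1) div 2 * z mod int p)) mod int p = z mod int p" for z
  proof -
    have "((int p + 1) div 2 * (2 * z mod int p)) mod int p = (((int p + 1) div 2 * 2) * z) mod int p"
      by (simp add: mod_mult_right_eq mult.assoc)
    also have "\<dots> = z mod int p" using two_half[OF assms(3)] by (simp add: distrib_right)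
    finally show "((int p + 1) div 2 * (2 * z mod int p)) mod int p = z mod int p" .
    have "(2 * ((int p + 1) div 2 * z mod int p)) mod int p = (((int p + 1) div 2 * 2) * z) mod int p"
      by (simp add: mod_mult_right_eq mult.assoc mult.commute mult.left_commute)
    also have "\<dots> = z mod int p" using two_half[OF assms(3)] by (simp add: distrib_right)
    finally show "(2 * ((int p + 1) div 2 * z mod int p)) mod int p = z mod int p" .
  qed
  show "psi p (phi p (f, a)) = (f, a)" "phi p (psi p (f, a)) = (f, a)"
    by (simp_all add: phi_def psi_def e r fun_eq_iff)
qed

lemma phi_iso:
  assumes "p > 0" "odd p"
  shows "phi p \<in> iso (wreath p k) (wreath p k)"
  unfolding iso_def
proof (intro CollectI conjI phi_hom[OF assms(1)])
  show "bij_betw (phi p) (carrier (wreath p k)) (carrier (wreath p k))"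
  proof (rule bij_betw_byWitness[where f'="psi p"])
    show "\<forall>a\<in>carrier (wreath p k). psi p (phi p a) = a"
      using phi_psi[OF _ assms] by auto
    show "\<forall>a\<in>carrier (wreath p k). phi p (psi p a) = a"
      using phi_psi[OF _ assms] by auto
    show "phi p ` carrier (wreath p k) \<subseteq> carrier (wreath p k)"
      using scal_carrier[OF _ assms(1)] by (auto simp: phi_def)
    show "psi p ` carrier (wreath p k) \<subseteq> carrier (wreath p k)"
      using scal_carrier[OF _ assms(1)] by (auto simp: psi_def)
  qed
qed

lemma rc_eq:
  fixes G (structure)
  assumes G: "group G" and hom: "\<phi> \<in> hom G G" and kc: "k \<in> carrier G" and gc: "g' \<in> carrier G"
    and g: "g = k \<otimes>\<^bsub>G\<^esub> g' \<otimes>\<^bsub>G\<^esub> \<phi> (inv\<^bsub>G\<^esub> k)"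
  shows "{h \<otimes>\<^bsub>G\<^esub> g \<otimes>\<^bsub>G\<^esub> \<phi> (inv\<^bsub>G\<^esub> h) | h. h \<in> carrier G} =
         {h \<otimes>\<^bsub>G\<^esub> g' \<otimes>\<^bsub>G\<^esub> \<phi> (inv\<^bsub>G\<^esub> h) | h. h \<in> carrier G}"
proof -
  interpret group G by (rule G)
  have pc: "\<phi> x \<in> carrier G" if "x \<in> carrier G" for x using hom that by (auto simp: hom_def)
  have pm: "\<phi> (x \<otimes> y) = \<phi> x \<otimes> \<phi> y" if "x \<in> carrier G" "y \<in> carrier G" for x y
    using hom_mult[OF hom that] .
  have cancel: "inv k \<otimes> (k \<otimes> z) = z" if "z \<in> carrier G" for z
    using that kc by (simp add: m_assoc[symmetric])
  show ?thesis
  proof (intro equalityI subsetI)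
    fix x assume "x \<in> {h \<otimes> g \<otimes> \<phi> (inv h) | h. h \<in> carrier G}"
    then obtain h where h: "h \<in> carrier G" and x: "x = h \<otimes> g \<otimes> \<phi> (inv h)" by auto
    have "x = (h \<otimes> k) \<otimes> g' \<otimes> \<phi> (inv (h \<otimes> k))"
      using h kc gc by (simp add: x g inv_mult_group pm pc m_assoc)
    then show "x \<in> {h \<otimes> g' \<otimes> \<phi> (inv h) | h. h \<in> carrier G}" using h kc by blast
  next
    fix x assume "x \<in> {h \<otimes> g' \<otimes> \<phi> (inv h) | h. h \<in> carrier G}"
    then obtain h where h: "h \<in> carrier G" and x: "x = h \<otimes> g' \<otimes> \<phi> (inv h)" by auto
    have "(h \<otimes> inv k) \<otimes> g \<otimes> \<phi> (inv (h \<otimes> inv k)) = h \<otimes> g' \<otimes> (\<phi> (inv k) \<otimes> \<phi> k) \<otimes> \<phi> (inv h)"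
      using h kc gc by (simp add: g inv_mult_group pm pc m_assoc cancel)
    also have "\<phi> (inv k) \<otimes> \<phi> k = \<one>"
      using kc by (simp add: pm[symmetric] hom_one[OF hom] )
    finally have "x = (h \<otimes> inv k) \<otimes> g \<otimes> \<phi> (inv (h \<otimes> inv k))"
      using h kc gc pc by (simp add: x)
    then show "x \<in> {h \<otimes> g \<otimes> \<phi> (inv h) | h. h \<in> carrier G}" using h kc by blast
  qed
qed

lemma modh: "((A::int) mod P + 2 * (- B mod P) mod P) mod P = (A - 2 * B) mod P"
proof -
  have "(2 * (- B mod P)) mod P = (2 * (- B)) mod P" by (simp add: mod_mult_right_eq)
  then have "(A mod P + 2 * (- B mod P) mod P) mod P = (A mod P + (2 * (- B)) mod P) mod P" by simp
  also have "\<dots> = (A + 2 * (- B)) mod P" by (simp add: mod_add_eq)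
  finally show ?thesis by simp
qed

lemma twist:
  assumes "(u, v) \<in> carrier (wreath p k)" "p > 0"
  shows "(u, v) \<otimes>\<^bsub>wreath p k\<^esub> ((\<lambda>x. 0), y0) \<otimes>\<^bsub>wreath p k\<^esub> phi p (inv\<^bsub>wreath p k\<^esub> (u, v))
     = ((\<lambda>x. (u x - 2 * u (\<lambda>i. 2 * v i + y0 i - x i)) mod int p), (\<lambda>i. 2 * v i + y0 i))"
proof -
  have e: "(\<lambda>i. - (x i - (v i + y0 i)) + v i) = (\<lambda>i. 2 * v i + y0 i - x i)" for x
    by (auto simp: fun_eq_iff)
  show ?thesis using assms
    by (simp add: wr_inv wr_mult phi_def fun_eq_iff add_diff_eq modh)
qed

lemma modk:
  assumes "((c::int) * (-3)) mod P = 1"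
  shows "((c * (A + 2 * B)) mod P - 2 * ((c * (B + 2 * A)) mod P)) mod P = A mod P"
proof -
  have "(2 * ((c * (B + 2 * A)) mod P)) mod P = (2 * (c * (B + 2 * A))) mod P" by (simp add: mod_mult_right_eq)
  then have "((c * (A + 2 * B)) mod P - 2 * ((c * (B + 2 * A)) mod P)) mod P
      = ((c * (A + 2 * B)) mod P - (2 * (c * (B + 2 * A))) mod P) mod P" by (metis mod_diff_right_eq)
  also have "\<dots> = (c * (A + 2 * B) - 2 * (c * (B + 2 * A))) mod P" by (rule mod_diff_eq)
  also have "c * (A + 2 * B) - 2 * (c * (B + 2 * A)) = (c * (-3)) * A" by (simp add: algebra_simps)
  also have "((c * (-3)) * A) mod P = (((c * (-3)) mod P) * A) mod P" by (simp add: mod_mult_left_eq)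
  finally show ?thesis using assms by simp
qed

lemma inv3:
  assumes "prime p" "p > 3"
  shows "\<exists>c::int. (c * (-3)) mod int p = 1"
proof -
  have "\<not> p dvd 3" using assms(2) by (auto dest: dvd_imp_le)
  then have "coprime p 3" using assms(1) prime_imp_coprime_nat by blast
  then have "coprime (int 3) (int p)" unfolding coprime_int_iff by (simp add: coprime_commute)
  then have g: "gcd (3::int) (int p) = 1" by (metis coprime_iff_gcd_eq_1 of_nat_numeral)
  obtain u w where "u * 3 + w * int p = gcd (3::int) (int p)" using bezout_int by blast
  then have "u * 3 = 1 + (- w) * int p" using g by simp
  then have e: "(- u) * (-3) = 1 + (- w) * int p" by simp
  have "((- u) * (-3)) mod int p = 1 mod int p" unfolding e by (rule mod_mult_self1)
  also have "\<dots> = 1" using assms(2) by simp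
  finally show ?thesis by blast
qed

lemma reach:
  assumes pr: "prime p" "p > 3" and g: "(a, y) \<in> carrier (wreath p k)"
  shows "\<exists>h\<in>carrier (wreath p k). \<exists>y0. y0 \<in> Zk k \<and> (\<forall>i. y0 i \<in> {0, 1}) \<and>
           (a, y) = h \<otimes>\<^bsub>wreath p k\<^esub> ((\<lambda>x. 0), y0) \<otimes>\<^bsub>wreath p k\<^esub> phi p (inv\<^bsub>wreath p k\<^esub> h)"
proof -
  obtain c :: int where c: "(c * (-3)) mod int p = 1" using inv3[OF pr] by blast
  have p0: "p > 0" using pr by simp
  define y0 where "y0 = (\<lambda>i. y i mod 2)"
  define v where "v = (\<lambda>i. y i div 2)"
  define u where "u = (\<lambda>x. (c * (a x + 2 * a (\<lambda>i. y i - x i))) mod int p)"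
  have yZ: "y \<in> Zk k" using g by (simp add: wr_carrier)
  have ye: "(\<lambda>i. 2 * v i + y0 i) = y" by (simp add: fun_eq_iff v_def y0_def)
  have y0Z: "y0 \<in> Zk k" using yZ by (simp add: Zk_def y0_def)
  have vZ: "v \<in> Zk k" using yZ by (simp add: Zk_def v_def)
  have y01: "\<forall>i. y0 i \<in> {0, 1}" by (auto simp: y0_def)
  have F1: "finite {x. a x \<noteq> 0}" using g by (simp add: wr_carrier)
  have F2: "finite {x. a (\<lambda>i. y i - x i) \<noteq> 0}"
    by (rule finite_supp_comp[where S="\<lambda>x i. y i - x i"]) (use F1 in auto)
  have "{x. u x \<noteq> 0} \<subseteq> {x. a x \<noteq> 0} \<union> {x. a (\<lambda>i. y i - x i) \<noteq> 0}"
    by (auto simp: u_def)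
  then have Fu: "finite {x. u x \<noteq> 0}" using F1 F2 finite_subset by blast
  have Zu: "x \<in> Zk k" if "u x \<noteq> 0" for x
  proof -
    have "a x \<noteq> 0 \<or> a (\<lambda>i. y i - x i) \<noteq> 0" using that by (auto simp: u_def)
    then show ?thesis
    proof
      assume "a (\<lambda>i. y i - x i) \<noteq> 0"
      then have "(\<lambda>i. y i - x i) \<in> Zk k" using g by (auto simp: wr_carrier)
      then show ?thesis using yZ by (auto simp: Zk_def)
    qed (use g in \<open>auto simp: wr_carrier\<close>)
  qed
  have uc: "(u, v) \<in> carrier (wreath p k)"
    using Fu Zu vZ p0 by (auto simp: wr_carrier u_def)
  have ar: "a x mod int p = a x" for x using g by (auto simp: wr_carrier)
  have "(u, v) \<otimes>\<^bsub>wreath p k\<^esub> ((\<lambda>x. 0), y0) \<otimes>\<^bsub>wreath p k\<^esub> phi p (inv\<^bsub>wreath p k\<^esub> (u, v))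
     = ((\<lambda>x. (u x - 2 * u (\<lambda>i. y i - x i)) mod int p), y)"
    using twist[OF uc p0, of y0] ye by (simp add: fun_eq_iff)
  also have "(\<lambda>x. (u x - 2 * u (\<lambda>i. y i - x i)) mod int p) = a"
  proof
    fix x
    have "(\<lambda>i. y i - (y i - x i)) = x" by simp
    then have "u (\<lambda>i. y i - x i) = (c * (a (\<lambda>i. y i - x i) + 2 * a x)) mod int p"
      by (simp add: u_def)
    then show "(u x - 2 * u (\<lambda>i. y i - x i)) mod int p = a x"
      using modk[OF c, of "a x" "a (\<lambda>i. y i - x i)"] ar by (simp add: u_def)
  qed
  finally show ?thesis using uc y0Z y01 by metis
qed

lemma Y_finite: "finite {y0 :: nat \<Rightarrow> int. y0 \<in> Zk k \<and> (\<forall>i. y0 i \<in> {0, 1})}"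
proof -
  have "{y0 :: nat \<Rightarrow> int. y0 \<in> Zk k \<and> (\<forall>i. y0 i \<in> {0, 1})} \<subseteq>
        (\<lambda>s i. if i \<in> s then 1 else 0) ` Pow {..<k}"
  proof
    fix y0 :: "nat \<Rightarrow> int" assume y: "y0 \<in> {y0. y0 \<in> Zk k \<and> (\<forall>i. y0 i \<in> {0, 1})}"
    have "y0 = (\<lambda>i. if i \<in> {i. i < k \<and> y0 i = 1} then 1 else 0)"
    proof
      fix i show "y0 i = (if i \<in> {i. i < k \<and> y0 i = 1} then 1 else 0)"
        using y by (cases "i < k") (auto simp: Zk_def)
    qed
    then show "y0 \<in> (\<lambda>s i. if i \<in> s then 1 else 0) ` Pow {..<k}"
      by (intro rev_image_eqI[of "{i. i < k \<and> y0 i = 1}"]) auto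
  qed
  then show ?thesis by (rule finite_subset) simp
qed

theorem theorem3p5:
  fixes p k :: nat
  assumes "prime p" and "p > 3" and "k \<ge> 1"
  shows "(\<exists>\<phi>\<in>iso (wreath p k) (wreath p k).
            finite (reidemeister_classes (wreath p k) \<phi>))
         \<and> \<not> has_R_infty (wreath p k)"
proof -
  have p0: "p > 0" using assms by simp
  have od: "odd p" using assms prime_odd_nat[of p] by simp
  let ?G = "wreath p k"
  let ?C = "\<lambda>g. {h \<otimes>\<^bsub>?G\<^esub> g \<otimes>\<^bsub>?G\<^esub> phi p (inv\<^bsub>?G\<^esub> h) | h. h \<in> carrier ?G}"
  let ?Y = "{y0 :: nat \<Rightarrow> int. y0 \<in> Zk k \<and> (\<forall>i. y0 i \<in> {0, 1})}"
  have iso: "phi p \<in> iso ?G ?G" using phi_iso[OF p0 od] .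
  have hom: "phi p \<in> hom ?G ?G" using iso by (simp add: iso_def)
  have sub: "reidemeister_classes ?G (phi p) \<subseteq> ?C ` ((\<lambda>y0. ((\<lambda>x. 0), y0)) ` ?Y)"
  proof
    fix X assume "X \<in> reidemeister_classes ?G (phi p)"
    then obtain g where gc: "g \<in> carrier ?G" and X: "X = ?C g"
      unfolding reidemeister_classes_def by auto
    obtain a y where gg: "g = (a, y)" by (cases g)
    obtain h y0 where hc: "h \<in> carrier ?G" and y0: "y0 \<in> ?Y"
      and e: "(a, y) = h \<otimes>\<^bsub>?G\<^esub> ((\<lambda>x. 0), y0) \<otimes>\<^bsub>?G\<^esub> phi p (inv\<^bsub>?G\<^esub> h)"
      using reach[OF assms(1,2), of a y k] gc gg by auto
    have g'c: "((\<lambda>x. 0), y0) \<in> carrier ?G" using y0 p0 by (simp add: wr_carrier)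
    have "?C g = ?C ((\<lambda>x. 0), y0)"
      using rc_eq[OF wr_group[OF p0] hom hc g'c] e gg by simp
    then show "X \<in> ?C ` ((\<lambda>y0. ((\<lambda>x. 0), y0)) ` ?Y)" using X y0 by blast
  qed
  have fin: "finite (reidemeister_classes ?G (phi p))"
    by (rule finite_subset[OF sub]) (intro finite_imageI Y_finite)
  show ?thesis using iso fin unfolding has_R_infty_def by blast
qed

end
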